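(* Let $B=B(x,r)\subset\mathbb{R}^n$ be any ball. There exists a constant $c=c(n)>0$ such that for any non-constant harmonic function $u$ defined in $2B$ satisfying $u(x)\geq 0$, we have $$\sup_{\frac43 B} u\geq c\,\sup_B|u|.$$
   Context: For a ball $B=B(x,r)$ and $k>0$, $kB=B(x,kr)$. *)

theory Defs
  imports "HOL-Analysis.Analysis"
begin

text \<open>Classical harmonic function on an open set S: u is C^2 on S and its Laplacian
  (trace of the Hessian) vanishes. grad x is the gradient of u at x, hess x is the
  (Frechet) derivative of the gradient at x, a linear map; the Laplacian is
  the sum over the basis vectors i of (hess x i) dot i.\<close>
definition harmonic_on :: "('a::euclidean_space \<Rightarrow> real) \<Rightarrow> 'a set \<Rightarrow> bool" where
  "harmonic_on u S \<longleftrightarrow> open S \<and>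
     (\<exists>grad :: 'a \<Rightarrow> 'a. \<exists>hess :: 'a \<Rightarrow> 'a \<Rightarrow> 'a.
        (\<forall>x\<in>S. (u has_derivative (\<lambda>h. grad x \<bullet> h)) (at x)) \<and>
        (\<forall>x\<in>S. (grad has_derivative hess x) (at x)) \<and>
        (\<forall>i\<in>Basis. continuous_on S (\<lambda>x. hess x i)) \<and>
        (\<forall>x\<in>S. (\<Sum>i\<in>Basis. hess x i \<bullet> i) = 0))"

end

theory Submission
  imports Defs
begin


lemma cutoff_cont:
  fixes c f :: "'b::topological_space \<Rightarrow> real"
  assumes "open A" "continuous_on A f" "continuous_on T c" "closed K" "T \<inter> K \<subseteq> A"
    "\<And>y. y \<in> T \<Longrightarrow> y \<notin> K \<Longrightarrow> c y = 0"
  shows "continuous_on T (\<lambda>y. c y * f y)"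
proof -
  have 1: "continuous_on (T \<inter> A) (\<lambda>y. c y * f y)"
    by (intro continuous_intros continuous_on_subset[OF assms(3)] continuous_on_subset[OF assms(2)]) auto
  have 2: "continuous_on (T \<inter> - K) (\<lambda>y. c y * f y)"
    by (rule continuous_on_eq[where f="\<lambda>_. 0"]) (use assms(6) in auto)
  have "T = (T \<inter> A) \<union> (T \<inter> - K)" using assms(5) by auto
  moreover have "continuous_on ((T \<inter> A) \<union> (T \<inter> - K)) (\<lambda>y. c y * f y)"
    using continuous_on_cases_local_open[OF _ _ 1 2, of "\<lambda>_. True"]
    by (metis (no_types, lifting) Int_Un_eq(2) Un_Int_eq(3) assms(1) assms(4) open_Compl openin_open_Int
      \<open>T = (T \<inter> A) \<union> (T \<inter> - K)\<close>)
  ultimately show ?thesis by simp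
qed



lemma pm_deriv:
  assumes k: "k \<ge> 2"
  shows "((\<lambda>s::real. (max 0 s)^k) has_real_derivative (k * (max 0 s)^(k-1))) (at s)"
proof (cases "s = 0")
  case True
  have "((\<lambda>y. ((max 0 y)^k - (max 0 0)^k) / (y - 0)) \<longlongrightarrow> 0) (at (0::real))"
  proof (rule Lim_null_comparison)
    show "\<forall>\<^sub>F y in at 0. norm (((max 0 y)^k - (max 0 0)^k) / (y - 0)) \<le> \<bar>y\<bar>^(k-1)"
    proof (rule always_eventually, intro allI)
      fix y :: real
      show "norm (((max 0 y)^k - (max 0 0)^k) / (y - 0)) \<le> \<bar>y\<bar>^(k-1)"
      proof (cases "y = 0")
        case False
        have "\<bar>max 0 y\<bar>^k \<le> \<bar>y\<bar>^k" by (intro power_mono) auto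
        also have "\<bar>y\<bar>^k = \<bar>y\<bar>^(k-1) * \<bar>y\<bar>" using k
          by (metis One_nat_def Suc_pred' le_zero_eq not_gr_zero numeral_2_eq_2 power_Suc2 zero_neq_numeral)
        moreover have "(0::real)^k = 0" using k by simp
        ultimately show ?thesis using False k by (simp add: abs_divide divide_le_eq power_abs power_0_left)
      qed (use k in auto)
    qed
    show "((\<lambda>y. \<bar>y\<bar>^(k-1)) \<longlongrightarrow> 0) (at (0::real))"
      using k by (auto intro!: tendsto_eq_intros)
  qed
  moreover have "real k * max 0 s ^ (k - 1) = 0" using k True by (cases k) auto
  ultimately show ?thesis using True by (simp only: has_field_derivative_iff)
next
  case False
  show ?thesis
  proof (cases "s > 0")
    case True
    have m: "max 0 s = s" using True by simp
    have "((\<lambda>s::real. s^k) has_real_derivative (k * s^(k-1))) (at s)"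
      using DERIV_pow[of k s] by simp
    then show ?thesis unfolding m
      by (rule has_field_derivative_transform_within_open[where S="{0<..}"]) (use True in auto)
  next
    case F: False
    then have "s < 0" using False by auto
    have z: "(0::real)^k = 0" using k by (cases k) auto
    have "((\<lambda>s::real. 0) has_real_derivative 0) (at s)" by (rule DERIV_const)
    then have "((\<lambda>s::real. (max 0 s)^k) has_real_derivative 0) (at s)"
    proof (rule has_field_derivative_transform_within_open[where S="{..<0}"])
      fix x :: real assume "x \<in> {..<0}"
      then have "max 0 x = 0" by simp
      then show "0 = (max 0 x)^k" using z by simp
    qed (use \<open>s < 0\<close> in auto)
    moreover have m0: "max 0 s = 0" using \<open>s < 0\<close> by simp
    moreover have zk: "(0::real)^(k-1) = 0" using k by (cases k) auto
    have "real k * max 0 s ^ (k-1) = 0" by (simp only: m0 zk mult_zero_right)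
    ultimately show ?thesis by (simp only:)
  qed
qed


definition Phi :: "'a::euclidean_space \<Rightarrow> real" where
  "Phi z = (max 0 (1 - z \<bullet> z))^3"
definition Psi :: "'a::euclidean_space \<Rightarrow> real" where
  "Psi z = - ((max 0 (1 - z \<bullet> z))^4) / 8"

lemma Phi_zero: "norm z \<ge> 1 \<Longrightarrow> Phi z = 0"
proof -
  assume "norm z \<ge> 1"
  then have "z \<bullet> z \<ge> 1" by (metis inner_ge_zero norm_eq_sqrt_inner one_le_power power2_eq_square real_sqrt_pow2)
  then show ?thesis by (simp add: Phi_def)
qed

lemma Psi_zero: "norm z \<ge> 1 \<Longrightarrow> Psi z = 0"
proof -
  assume "norm z \<ge> 1"
  then have "z \<bullet> z \<ge> 1" by (metis inner_ge_zero norm_eq_sqrt_inner one_le_power power2_eq_square real_sqrt_pow2)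
  then show ?thesis by (simp add: Psi_def)
qed

lemma Phi_nonneg: "Phi z \<ge> 0" by (simp add: Phi_def)

lemma Phi_le1: "Phi z \<le> 1"
proof -
  have "max 0 (1 - z \<bullet> z) \<le> 1" by simp
  then show ?thesis unfolding Phi_def by (simp add: power_le_one)
qed

lemma cont_Phi: "continuous_on UNIV Phi"
  unfolding Phi_def by (intro continuous_intros)

lemma cont_Psi: "continuous_on UNIV Psi"
  unfolding Psi_def by (intro continuous_intros) auto

lemma Psi_dir: "((\<lambda>s. Psi (z + s *\<^sub>R i)) has_real_derivative (Phi z * (z \<bullet> i))) (at 0)"
proof -
  define g where "g s = 1 - z \<bullet> z - 2 * s * (z \<bullet> i) - s^2 * (i \<bullet> i)" for s :: real
  have g: "1 - (z + s *\<^sub>R i) \<bullet> (z + s *\<^sub>R i) = g s" for s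
    by (simp add: g_def inner_add_left inner_add_right inner_commute power2_eq_square algebra_simps)
  have dg: "(g has_real_derivative (- 2 * (z \<bullet> i))) (at 0)"
    unfolding g_def by (auto intro!: derivative_eq_intros)
  have dp: "((\<lambda>s::real. (max 0 s)^4) has_real_derivative (4 * (max 0 (g 0))^3)) (at (g 0))"
    using pm_deriv[of 4 "g 0"] by simp
  have "((\<lambda>s. (max 0 (g s))^4) has_real_derivative (4 * (max 0 (g 0))^3) * (- 2 * (z \<bullet> i))) (at 0)"
    by (rule DERIV_chain2[OF dp dg])
  then have d: "((\<lambda>s. (-1/8) * (max 0 (g s))^4) has_real_derivative (-1/8) * ((4 * (max 0 (g 0))^3) * (- 2 * (z \<bullet> i)))) (at 0)"
    by (rule DERIV_cmult)
  have e1: "(\<lambda>s. Psi (z + s *\<^sub>R i)) = (\<lambda>s. (-1/8) * (max 0 (g s))^4)"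
    by (rule ext) (simp add: Psi_def g)
  have e2: "(-1/8) * ((4 * (max 0 (g 0))^3) * (- 2 * (z \<bullet> i))) = Phi z * (z \<bullet> i)"
    by (simp add: Phi_def g_def)
  show ?thesis using d unfolding e1 e2 .
qed



lemma notin_cbox_norm:
  fixes x :: "'a::euclidean_space"
  assumes "x \<notin> cbox (-(k *\<^sub>R One)) (k *\<^sub>R One)"
  shows "k < norm x"
proof -
  from assms obtain b where b: "b \<in> Basis" "\<not> (-k \<le> x \<bullet> b \<and> x \<bullet> b \<le> k)"
    by (auto simp: mem_box inner_minus_left)
  then have "k < \<bar>x \<bullet> b\<bar>" by auto
  also have "\<dots> \<le> norm x" using Basis_le_norm[OF b(1)] .
  finally show ?thesis .
qed

lemma hi_UNIV:
  fixes f :: "'a::euclidean_space \<Rightarrow> real"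
  assumes "continuous_on UNIV f" "\<And>z. norm z \<ge> k \<Longrightarrow> f z = 0"
  shows "(f has_integral integral (cbox (-(k *\<^sub>R One)) (k *\<^sub>R One)) f) UNIV"
proof (rule has_integral_on_superset)
  show "(f has_integral integral (cbox (-(k *\<^sub>R One)) (k *\<^sub>R One)) f) (cbox (-(k *\<^sub>R One)) (k *\<^sub>R One))"
    using integrable_continuous[OF continuous_on_subset[OF assms(1)]] by blast
  show "f x = 0" if "x \<notin> cbox (-(k *\<^sub>R One)) (k *\<^sub>R One)" for x
    using notin_cbox_norm[OF that] assms(2) by auto
qed auto

lemma affine_UNIV:
  fixes f :: "'a::euclidean_space \<Rightarrow> real"
  assumes f: "(f has_integral I) UNIV" and z: "\<And>x. x \<notin> cbox a b \<Longrightarrow> f x = 0" and m: "m \<noteq> 0"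
  shows "((\<lambda>x. f (m *\<^sub>R x + c)) has_integral (I / \<bar>m\<bar>^DIM('a))) UNIV"
proof -
  have "((\<lambda>x. if x \<in> cbox a b then f x else 0) has_integral I) UNIV"
    using f by (rule has_integral_eq[rotated]) (use z in auto)
  then have "(f has_integral I) (cbox a b)"
    by (simp add: has_integral_restrict_UNIV)
  from has_integral_affinity[OF this m, of c]
  have h: "((\<lambda>x. f (m *\<^sub>R x + c)) has_integral (I / \<bar>m\<bar>^DIM('a)))
      ((\<lambda>x. (1 / m) *\<^sub>R x + - ((1 / m) *\<^sub>R c)) ` cbox a b)"
    by (simp add: divide_inverse_commute)
  show ?thesis
  proof (rule has_integral_on_superset[OF h])
    fix x assume nx: "x \<notin> (\<lambda>x. (1 / m) *\<^sub>R x + - ((1 / m) *\<^sub>R c)) ` cbox a b"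
    have "m *\<^sub>R x + c \<notin> cbox a b"
    proof
      assume "m *\<^sub>R x + c \<in> cbox a b"
      moreover have "x = (1 / m) *\<^sub>R (m *\<^sub>R x + c) + - ((1 / m) *\<^sub>R c)"
        using m by (simp add: algebra_simps)
      ultimately show False using nx by blast
    qed
    then show "f (m *\<^sub>R x + c) = 0" by (rule z)
  qed auto
qed



lemma ibp_zero:
  fixes G D :: "'a::euclidean_space \<Rightarrow> real"
  assumes i: "i \<in> Basis"
  and deriv: "\<And>z. ((\<lambda>s. G (z + s *\<^sub>R i)) has_real_derivative D z) (at 0)"
  and contG: "continuous_on UNIV G" and contD: "continuous_on UNIV D"
  and G0: "\<And>z. norm z \<ge> 1 \<Longrightarrow> G z = 0" and D0: "\<And>z. norm z \<ge> 1 \<Longrightarrow> D z = 0"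
  shows "(D has_integral 0) UNIV"
proof -
  define C where "C = cbox (-(2 *\<^sub>R One)) (2 *\<^sub>R One :: 'a)"
  define ID where "ID = integral C D"
  define IG where "IG = integral C G"
  have hD: "(D has_integral ID) UNIV" using hi_UNIV[of D 2] contD D0 by (auto simp: ID_def C_def)
  have hG: "(G has_integral IG) UNIV" using hi_UNIV[of G 2] contG G0 by (auto simp: IG_def C_def)
  have GC: "G x = 0" if "x \<notin> C" for x using notin_cbox_norm[of x 2] that G0 by (auto simp: C_def)
  have DC: "D x = 0" if "x \<notin> C" for x using notin_cbox_norm[of x 2] that D0 by (auto simp: C_def)
  have ni: "norm i = 1" using i by simp
  have bound: "\<bar>ID\<bar> \<le> e * Henstock_Kurzweil_Integration.content C" if e: "e > 0" for e
  proof -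
    have "uniformly_continuous_on (cball 0 3) D"
      by (rule compact_uniformly_continuous) (use contD continuous_on_subset in auto)
    then obtain d where d: "d > 0" and
      dD: "\<And>x y. x \<in> cball 0 3 \<Longrightarrow> y \<in> cball 0 3 \<Longrightarrow> dist y x < d \<Longrightarrow> dist (D y) (D x) < e"
      unfolding uniformly_continuous_on_def using e by metis
    define t where "t = min (d/2) (1/2)"
    have t: "0 < t" "t < d" "t \<le> 1/2" using d by (auto simp: t_def)
    define F where "F z = (G (z + t *\<^sub>R i) - G z) / t" for z
    have "((\<lambda>z. G (1 *\<^sub>R z + t *\<^sub>R i)) has_integral (IG / \<bar>1\<bar>^DIM('a))) UNIV"
      by (rule affine_UNIV[OF hG, of "-(2 *\<^sub>R One)" "2 *\<^sub>R One"]) (use GC in \<open>auto simp: C_def\<close>)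
    then have "((\<lambda>z. G (z + t *\<^sub>R i)) has_integral IG) UNIV" by simp
    from has_integral_diff[OF this hG]
    have "((\<lambda>z. G (z + t *\<^sub>R i) - G z) has_integral 0) UNIV" by simp
    from has_integral_mult_left[OF this, of "1/t"]
    have "((\<lambda>x. (G (x + t *\<^sub>R i) - G x) / t) has_integral 0) UNIV" by simp
    then have hF: "(F has_integral 0) UNIV" unfolding F_def[abs_def] .
    have out: "D z = 0 \<and> F z = 0" if "norm z \<ge> 2" for z
    proof -
      have "norm (z + t *\<^sub>R i) \<ge> norm z - norm (t *\<^sub>R i)" using norm_diff_ineq[of z "t *\<^sub>R i"] by simp
      then have "norm (z + t *\<^sub>R i) \<ge> 1" using that t ni by simp
      then show ?thesis using that G0 D0 by (simp add: F_def)
    qed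
    have close: "norm (D z - F z) \<le> e" for z
    proof (cases "norm z \<ge> 2")
      case True
      have "norm (z + t *\<^sub>R i) \<ge> norm z - norm (t *\<^sub>R i)" using norm_diff_ineq[of z "t *\<^sub>R i"] by simp
      then have "norm (z + t *\<^sub>R i) \<ge> 1" using True t ni by simp
      then show ?thesis using True G0 D0 e by (simp add: F_def)
    next
      case False
      have der: "((\<lambda>s. G (z + s *\<^sub>R i)) has_real_derivative D (z + s *\<^sub>R i)) (at s)" for s
      proof -
        have "((\<lambda>x. G ((z + s *\<^sub>R i) + x *\<^sub>R i)) has_real_derivative D (z + s *\<^sub>R i)) (at 0)"
          by (rule deriv)
        then have "((\<lambda>x. G (z + (x + s) *\<^sub>R i)) has_real_derivative D (z + s *\<^sub>R i)) (at 0)"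
          by (simp add: algebra_simps)
        then show ?thesis using DERIV_shift[of "\<lambda>s. G (z + s *\<^sub>R i)" "D (z + s *\<^sub>R i)" 0 s] by simp
      qed
      obtain xi where xi: "0 < xi" "xi < t" "G (z + t *\<^sub>R i) - G (z + 0 *\<^sub>R i) = (t - 0) * D (z + xi *\<^sub>R i)"
        using MVT2[OF t(1), of "\<lambda>s. G (z + s *\<^sub>R i)" "\<lambda>s. D (z + s *\<^sub>R i)"] der by blast
      then have Fz: "F z = D (z + xi *\<^sub>R i)" using t by (simp add: F_def)
      have "norm (z + xi *\<^sub>R i) \<le> norm z + norm (xi *\<^sub>R i)" by (rule norm_triangle_ineq)
      then have "norm (z + xi *\<^sub>R i) \<le> 3" using False xi t ni by simp
      moreover have "norm z \<le> 3" using False by simp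
      moreover have "dist (z + xi *\<^sub>R i) z < d" using xi t ni by (simp add: dist_norm)
      ultimately have "dist (D (z + xi *\<^sub>R i)) (D z) < e" by (intro dD) auto
      then show ?thesis using Fz by (simp add: dist_norm norm_minus_commute)
    qed
    have "((\<lambda>z. D z - F z) has_integral ID - 0) UNIV" by (rule has_integral_diff[OF hD hF])
    then have "((\<lambda>z. D z - F z) has_integral ID) UNIV" by simp
    then have "((\<lambda>z. if z \<in> C then D z - F z else 0) has_integral ID) UNIV"
    proof (rule has_integral_eq[rotated])
      fix z show "D z - F z = (if z \<in> C then D z - F z else 0)"
        using out[of z] notin_cbox_norm[of z 2] by (auto simp: C_def)
    qed
    then have hC: "((\<lambda>z. D z - F z) has_integral ID) C"
      by (simp add: has_integral_restrict_UNIV)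
    have "norm ID \<le> e * Henstock_Kurzweil_Integration.content C"
      unfolding C_def
    proof (rule has_integral_bound)
      show "0 \<le> e" using e by simp
      show "((\<lambda>z. D z - F z) has_integral ID) (cbox (-(2 *\<^sub>R One)) (2 *\<^sub>R One))" using hC by (simp add: C_def)
      show "norm (D x - F x) \<le> e" for x by (rule close)
    qed
    then show ?thesis by simp
  qed
  have "ID = 0"
  proof (rule ccontr)
    assume "ID \<noteq> 0"
    define e where "e = \<bar>ID\<bar> / (2 * (Henstock_Kurzweil_Integration.content C + 1))"
    have "e > 0" using \<open>ID \<noteq> 0\<close> by (simp add: e_def add_nonneg_pos)
    have "e * Henstock_Kurzweil_Integration.content C < \<bar>ID\<bar>"
    proof -
      have "e * Henstock_Kurzweil_Integration.content C \<le> e * (Henstock_Kurzweil_Integration.content C + 1) / 1" using \<open>e > 0\<close> by simp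
      also have "\<dots> = \<bar>ID\<bar> / 2"
      proof -
        have "Henstock_Kurzweil_Integration.content C + 1 > 0" by (simp add: add_nonneg_pos)
        then show ?thesis by (simp add: e_def field_simps)
      qed
      also have "\<dots> < \<bar>ID\<bar>" using \<open>ID \<noteq> 0\<close> by simp
      finally show ?thesis .
    qed
    with bound[OF \<open>e > 0\<close>] show False by simp
  qed
  then show ?thesis using hD by simp
qed



lemma mean_value:
  fixes v :: "'a::euclidean_space \<Rightarrow> real" and grad :: "'a \<Rightarrow> 'a" and hess :: "'a \<Rightarrow> 'a \<Rightarrow> 'a"
  assumes S: "open S" and gr: "\<forall>x\<in>S. (v has_derivative (\<lambda>h. grad x \<bullet> h)) (at x)"
   and he: "\<forall>x\<in>S. (grad has_derivative hess x) (at x)"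
   and hc: "\<forall>i\<in>Basis. continuous_on S (\<lambda>x. hess x i)"
   and lap: "\<forall>x\<in>S. (\<Sum>i\<in>Basis. hess x i \<bullet> i) = 0"
   and R: "R > 0" "cball p R \<subseteq> S"
  shows "((\<lambda>z. Phi z * v (p + R *\<^sub>R z)) has_integral v p * integral (cbox (-One) One) (Phi :: 'a \<Rightarrow> real)) (cbox (-One) One)"
proof -
  define Q :: "'a set" where "Q = cbox (-One) One"
  define U :: "real set" where "U = {0..R}"
  define f where "f \<rho> z = Phi z * v (p + \<rho> *\<^sub>R z)" for \<rho> z
  define fx where "fx \<rho> z = Phi z * (grad (p + \<rho> *\<^sub>R z) \<bullet> z)" for \<rho> z
  have inS: "p + \<rho> *\<^sub>R z \<in> S" if "\<rho> \<in> U" "norm z \<le> 1" for \<rho> z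
  proof -
    have r0: "0 \<le> \<rho>" "\<rho> \<le> R" using that(1) by (auto simp: U_def)
    have "norm (\<rho> *\<^sub>R z) = \<rho> * norm z" using r0 by simp
    also have "\<dots> \<le> R * 1" using r0 that(2) by (intro mult_mono) auto
    finally have "norm (\<rho> *\<^sub>R z) \<le> R" by simp
    then show ?thesis using R(2) by (auto simp: dist_norm)
  qed
  have contv: "continuous_on S v"
    using gr has_derivative_continuous continuous_at_imp_continuous_on by blast
  have contg: "continuous_on S grad"
    using he has_derivative_continuous continuous_at_imp_continuous_on by blast
  have derf: "((\<lambda>\<rho>. f \<rho> z) has_field_derivative fx \<rho> z) (at \<rho> within U)" if "\<rho> \<in> U" for \<rho> z
  proof (cases "norm z \<ge> 1")
    case True
    have "((\<lambda>\<rho>. 0) has_field_derivative 0) (at \<rho> within U)" by (rule DERIV_const)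
    then show ?thesis using True by (simp add: f_def fx_def Phi_zero)
  next
    case False
    then have pS: "p + \<rho> *\<^sub>R z \<in> S" using inS that by simp
    have d1: "((\<lambda>\<rho>. p + \<rho> *\<^sub>R z) has_derivative (\<lambda>h. h *\<^sub>R z)) (at \<rho> within U)"
      by (auto intro!: derivative_eq_intros)
    have "((\<lambda>\<rho>. v (p + \<rho> *\<^sub>R z)) has_derivative (\<lambda>h. grad (p + \<rho> *\<^sub>R z) \<bullet> (h *\<^sub>R z))) (at \<rho> within U)"
      by (rule has_derivative_compose[OF d1 gr[rule_format, OF pS]])
    moreover have "(\<lambda>h. grad (p + \<rho> *\<^sub>R z) \<bullet> (h *\<^sub>R z)) = (*) (grad (p + \<rho> *\<^sub>R z) \<bullet> z)"
      by (rule ext) simp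
    ultimately have "((\<lambda>\<rho>. v (p + \<rho> *\<^sub>R z)) has_field_derivative (grad (p + \<rho> *\<^sub>R z) \<bullet> z)) (at \<rho> within U)"
      by (simp add: has_field_derivative_def)
    then show ?thesis unfolding f_def fx_def by (rule DERIV_cmult)
  qed
  have Aopen: "open ((\<lambda>z. p + \<rho> *\<^sub>R z) -` S)" for \<rho>
    by (rule open_vimage[OF S]) (intro continuous_intros)
  have intf: "f \<rho> integrable_on Q" if "\<rho> \<in> U" for \<rho>
  proof -
    have "continuous_on Q (\<lambda>z. Phi z * v (p + \<rho> *\<^sub>R z))"
    proof (rule cutoff_cont[OF Aopen, where K="cball 0 1"])
      show "continuous_on ((\<lambda>z. p + \<rho> *\<^sub>R z) -` S) (\<lambda>z. v (p + \<rho> *\<^sub>R z))"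
        by (rule continuous_on_compose2[OF contv]) (auto intro!: continuous_intros)
      show "continuous_on Q Phi" by (rule continuous_on_subset[OF cont_Phi]) auto
      show "Q \<inter> cball 0 1 \<subseteq> (\<lambda>z. p + \<rho> *\<^sub>R z) -` S" using inS[OF that] by auto
      show "Phi y = 0" if "y \<notin> cball 0 1" for y using that by (intro Phi_zero) auto
    qed auto
    then show ?thesis unfolding Q_def f_def by (rule integrable_continuous)
  qed
  have contfx: "continuous_on (U \<times> Q) (\<lambda>(\<rho>, z). fx \<rho> z)"
  proof -
    have eq: "(\<lambda>(\<rho>, z). fx \<rho> z) = (\<lambda>y. Phi (snd y) * (grad (p + fst y *\<^sub>R snd y) \<bullet> snd y))"
      by (auto simp: fx_def)
    have "continuous_on (U \<times> Q) (\<lambda>y. Phi (snd y) * (grad (p + fst y *\<^sub>R snd y) \<bullet> snd y))"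
    proof (rule cutoff_cont[where A="(\<lambda>y. p + fst y *\<^sub>R snd y) -` S" and K="{y. norm (snd y) \<le> 1}"])
      show "open ((\<lambda>y::real \<times> 'a. p + fst y *\<^sub>R snd y) -` S)"
        by (rule open_vimage[OF S]) (intro continuous_intros)
      show "continuous_on ((\<lambda>y. p + fst y *\<^sub>R snd y) -` S) (\<lambda>y::real \<times> 'a. grad (p + fst y *\<^sub>R snd y) \<bullet> snd y)"
        by (intro continuous_intros continuous_on_compose2[OF contg]) auto
      show "continuous_on (U \<times> Q) (\<lambda>y. Phi (snd y))"
        by (rule continuous_on_compose2[OF cont_Phi]) (auto intro!: continuous_intros)
      show "closed {y::real \<times> 'a. norm (snd y) \<le> 1}"
        by (intro closed_Collect_le continuous_intros)
      show "U \<times> Q \<inter> {y. norm (snd y) \<le> 1} \<subseteq> (\<lambda>y. p + fst y *\<^sub>R snd y) -` S"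
        using inS by auto
      show "Phi (snd y) = 0" if "y \<in> U \<times> Q" "y \<notin> {y. norm (snd y) \<le> 1}" for y
        using that by (intro Phi_zero) auto
    qed
    then show ?thesis unfolding eq .
  qed
  have fx0: "integral Q (fx \<rho>) = 0" if rU: "\<rho> \<in> U" for \<rho>
  proof -
    define H where "H i z = Psi z * (grad (p + \<rho> *\<^sub>R z) \<bullet> i)" for i z
    define D where "D i z = Phi z * ((z \<bullet> i) * (grad (p + \<rho> *\<^sub>R z) \<bullet> i)) + Psi z * (\<rho> * (hess (p + \<rho> *\<^sub>R z) i \<bullet> i))" for i z
    have AS: "cball 0 1 \<subseteq> (\<lambda>z. p + \<rho> *\<^sub>R z) -` S" using inS[OF rU] by auto
    have hD: "(D i has_integral 0) UNIV" if i: "i \<in> Basis" for i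
    proof (rule ibp_zero[OF i, of "H i"])
      show "((\<lambda>s. H i (z + s *\<^sub>R i)) has_real_derivative D i z) (at 0)" for z
      proof (cases "p + \<rho> *\<^sub>R z \<in> S")
        case True
        have dq: "((\<lambda>s. grad (p + \<rho> *\<^sub>R (z + s *\<^sub>R i)) \<bullet> i) has_real_derivative (\<rho> * (hess (p + \<rho> *\<^sub>R z) i \<bullet> i))) (at 0)"
        proof -
          have d1: "((\<lambda>s. p + \<rho> *\<^sub>R (z + s *\<^sub>R i)) has_derivative (\<lambda>h. h *\<^sub>R (\<rho> *\<^sub>R i))) (at 0)"
            by (auto intro!: derivative_eq_intros simp: algebra_simps)
          have "((\<lambda>s. grad (p + \<rho> *\<^sub>R (z + s *\<^sub>R i))) has_derivative (\<lambda>h. hess (p + \<rho> *\<^sub>R z) (h *\<^sub>R (\<rho> *\<^sub>R i)))) (at 0)"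
            using has_derivative_compose[OF d1, of grad "hess (p + \<rho> *\<^sub>R z)"] he True by simp
          then have d2: "((\<lambda>s. grad (p + \<rho> *\<^sub>R (z + s *\<^sub>R i)) \<bullet> i) has_derivative (\<lambda>h. hess (p + \<rho> *\<^sub>R z) (h *\<^sub>R (\<rho> *\<^sub>R i)) \<bullet> i)) (at 0)"
            by (rule has_derivative_inner_left)
          have lin: "linear (hess (p + \<rho> *\<^sub>R z))" using he True has_derivative_linear by blast
          have "(\<lambda>h. hess (p + \<rho> *\<^sub>R z) (h *\<^sub>R (\<rho> *\<^sub>R i)) \<bullet> i) = (*) (\<rho> * (hess (p + \<rho> *\<^sub>R z) i \<bullet> i))"
          proof (rule ext)
            fix h :: real
            have "hess (p + \<rho> *\<^sub>R z) (h *\<^sub>R (\<rho> *\<^sub>R i)) = (h * \<rho>) *\<^sub>R hess (p + \<rho> *\<^sub>R z) i"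
              using linear_cmul[OF lin] by simp
            then show "hess (p + \<rho> *\<^sub>R z) (h *\<^sub>R (\<rho> *\<^sub>R i)) \<bullet> i = (\<rho> * (hess (p + \<rho> *\<^sub>R z) i \<bullet> i)) * h"
              by simp
          qed
          with d2 show ?thesis by (simp add: has_field_derivative_def)
        qed
        have "((\<lambda>s. Psi (z + s *\<^sub>R i) * (grad (p + \<rho> *\<^sub>R (z + s *\<^sub>R i)) \<bullet> i)) has_real_derivative
            (Phi z * (z \<bullet> i)) * (grad (p + \<rho> *\<^sub>R (z + 0 *\<^sub>R i)) \<bullet> i) + (\<rho> * (hess (p + \<rho> *\<^sub>R z) i \<bullet> i)) * Psi (z + 0 *\<^sub>R i)) (at 0)"
          by (rule DERIV_mult[OF Psi_dir dq])
        then show ?thesis by (simp add: H_def D_def algebra_simps)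
      next
        case False
        then have nz: "norm z > 1" using inS[OF rU, of z] by force
        have "((\<lambda>s. 0) has_real_derivative 0) (at 0)" by (rule DERIV_const)
        then have "((\<lambda>s. H i (z + s *\<^sub>R i)) has_real_derivative 0) (at 0)"
        proof (rule has_field_derivative_transform_within_open[where S="{s. 1 < norm (z + s *\<^sub>R i)}"])
          show "open {s. 1 < norm (z + s *\<^sub>R i)}" by (intro open_Collect_less continuous_intros)
          show "0 \<in> {s. 1 < norm (z + s *\<^sub>R i)}" using nz by simp
          show "0 = H i (z + s *\<^sub>R i)" if "s \<in> {s. 1 < norm (z + s *\<^sub>R i)}" for s
            using that by (simp add: H_def Psi_zero)
        qed
        moreover have "D i z = 0" using nz by (simp add: D_def Phi_zero Psi_zero)
        ultimately show ?thesis by simp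
      qed
      show "continuous_on UNIV (H i)"
        unfolding H_def[abs_def]
      proof (rule cutoff_cont[OF Aopen, where K="cball 0 1"])
        show "continuous_on ((\<lambda>z. p + \<rho> *\<^sub>R z) -` S) (\<lambda>z. grad (p + \<rho> *\<^sub>R z) \<bullet> i)"
          by (intro continuous_intros continuous_on_compose2[OF contg]) auto
      qed (use AS cont_Psi in \<open>auto intro!: Psi_zero\<close>)
      have c1: "continuous_on UNIV (\<lambda>z. Phi z * ((z \<bullet> i) * (grad (p + \<rho> *\<^sub>R z) \<bullet> i)))"
      proof (rule cutoff_cont[OF Aopen, where K="cball 0 1"])
        show "continuous_on ((\<lambda>z. p + \<rho> *\<^sub>R z) -` S) (\<lambda>z. (z \<bullet> i) * (grad (p + \<rho> *\<^sub>R z) \<bullet> i))"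
          by (intro continuous_intros continuous_on_compose2[OF contg]) auto
      qed (use AS cont_Phi in \<open>auto intro!: Phi_zero\<close>)
      have c2: "continuous_on UNIV (\<lambda>z. Psi z * (\<rho> * (hess (p + \<rho> *\<^sub>R z) i \<bullet> i)))"
      proof (rule cutoff_cont[OF Aopen, where K="cball 0 1"])
        show "continuous_on ((\<lambda>z. p + \<rho> *\<^sub>R z) -` S) (\<lambda>z. \<rho> * (hess (p + \<rho> *\<^sub>R z) i \<bullet> i))"
          by (intro continuous_intros continuous_on_compose2[OF hc[rule_format, OF i]]) auto
      qed (use AS cont_Psi in \<open>auto intro!: Psi_zero\<close>)
      show "continuous_on UNIV (D i)"
        unfolding D_def[abs_def] by (rule continuous_on_add[OF c1 c2])
      show "H i z = 0" if "norm z \<ge> 1" for z using that by (simp add: H_def Psi_zero)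
      show "D i z = 0" if "norm z \<ge> 1" for z using that by (simp add: D_def Psi_zero Phi_zero)
    qed
    have "((\<lambda>z. \<Sum>i\<in>Basis. D i z) has_integral (\<Sum>i\<in>Basis. 0)) UNIV"
      using has_integral_sum[of Basis D "\<lambda>_. 0" UNIV] hD by simp
    moreover have "(\<Sum>i\<in>Basis. D i z) = (if z \<in> Q then fx \<rho> z else 0)" for z
    proof (cases "norm z \<ge> 1")
      case True
      then show ?thesis by (simp add: D_def fx_def Phi_zero Psi_zero)
    next
      case False
      then have pS: "p + \<rho> *\<^sub>R z \<in> S" using inS[OF rU] by simp
      have zQ: "z \<in> Q" using notin_cbox_norm[of z 1] False by (auto simp: Q_def)
      have "(\<Sum>i\<in>Basis. D i z) = Phi z * (\<Sum>i\<in>Basis. (z \<bullet> i) * (grad (p + \<rho> *\<^sub>R z) \<bullet> i))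
          + Psi z * (\<rho> * (\<Sum>i\<in>Basis. hess (p + \<rho> *\<^sub>R z) i \<bullet> i))"
        by (simp add: D_def sum.distrib sum_distrib_left)
      also have "\<dots> = Phi z * (z \<bullet> grad (p + \<rho> *\<^sub>R z))"
      proof -
        have "z \<bullet> grad (p + \<rho> *\<^sub>R z) = (\<Sum>i\<in>Basis. (z \<bullet> i) * (grad (p + \<rho> *\<^sub>R z) \<bullet> i))"
          by (rule euclidean_inner)
        moreover have "(\<Sum>i\<in>Basis. hess (p + \<rho> *\<^sub>R z) i \<bullet> i) = 0" using lap pS by blast
        ultimately show ?thesis by simp
      qed
      finally show ?thesis using zQ by (simp add: fx_def inner_commute)
    qed
    ultimately have "((\<lambda>z. if z \<in> Q then fx \<rho> z else 0) has_integral 0) UNIV" by simp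
    then have "(fx \<rho> has_integral 0) Q" by (simp add: has_integral_restrict_UNIV)
    then show ?thesis by (rule integral_unique)
  qed
  have Md: "((\<lambda>\<rho>. integral Q (f \<rho>)) has_derivative (\<lambda>h. 0)) (at \<rho> within U)" if "\<rho> \<in> U" for \<rho>
  proof -
    have "((\<lambda>\<rho>. integral Q (f \<rho>)) has_field_derivative integral Q (fx \<rho>)) (at \<rho> within U)"
      unfolding Q_def
      by (rule leibniz_rule_field_derivative[OF derf intf[unfolded Q_def] contfx[unfolded Q_def] that])
         (auto simp: U_def)
    moreover have "(*) (0::real) = (\<lambda>h. 0)" by (rule ext) simp
    ultimately show ?thesis using fx0[OF that] by (simp add: has_field_derivative_def)
  qed
  obtain c where "\<forall>\<rho>\<in>U. integral Q (f \<rho>) = c"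
    using has_derivative_zero_constant[of U, OF _ Md] by (auto simp: U_def)
  then have "integral Q (f R) = integral Q (f 0)" using R(1) by (auto simp: U_def)
  moreover have "f R = (\<lambda>z. Phi z * v (p + R *\<^sub>R z))" by (rule ext) (simp add: f_def)
  moreover have "f 0 = (\<lambda>z. Phi z * v p)" by (rule ext) (simp add: f_def)
  moreover have "integral Q (\<lambda>z. Phi z * v p) = integral Q Phi * v p" by (rule integral_mult_left)
  ultimately have "integral Q (\<lambda>z. Phi z * v (p + R *\<^sub>R z)) = v p * integral Q Phi"
    unfolding Q_def by (simp only: mult.commute)
  moreover have "f R integrable_on Q" using intf R(1) by (simp add: U_def)
  ultimately show ?thesis unfolding Q_def
    using \<open>f R = (\<lambda>z. Phi z * v (p + R *\<^sub>R z))\<close> has_integral_integrable_integral by metis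
qed



lemma mv_UNIV:
  fixes v :: "'a::euclidean_space \<Rightarrow> real" and grad :: "'a \<Rightarrow> 'a" and hess :: "'a \<Rightarrow> 'a \<Rightarrow> 'a"
  assumes S: "open S" and gr: "\<forall>x\<in>S. (v has_derivative (\<lambda>h. grad x \<bullet> h)) (at x)"
   and he: "\<forall>x\<in>S. (grad has_derivative hess x) (at x)"
   and hc: "\<forall>i\<in>Basis. continuous_on S (\<lambda>x. hess x i)"
   and lap: "\<forall>x\<in>S. (\<Sum>i\<in>Basis. hess x i \<bullet> i) = 0"
   and R: "R > 0" "cball p R \<subseteq> S"
  shows "((\<lambda>y. Phi ((1/R) *\<^sub>R (y - p)) * v y) has_integral
     R^DIM('a) * (v p * integral (cbox (-One) One) (Phi :: 'a \<Rightarrow> real))) UNIV"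
proof -
  let ?I = "v p * integral (cbox (-One) One) (Phi :: 'a \<Rightarrow> real)"
  let ?F = "\<lambda>z. Phi z * v (p + R *\<^sub>R z)"
  have zero: "?F z = 0" if "z \<notin> cbox (-One) One" for z
    using notin_cbox_norm[of z 1] that by (simp add: Phi_zero)
  have "(?F has_integral ?I) (cbox (-One) One)" by (rule mean_value[OF assms])
  then have "(?F has_integral ?I) UNIV"
    by (rule has_integral_on_superset) (use zero in auto)
  from affine_UNIV[OF this zero, where m="1/R" and c="- ((1/R) *\<^sub>R p)"]
  have "((\<lambda>x. ?F ((1/R) *\<^sub>R x + - ((1/R) *\<^sub>R p))) has_integral ?I / \<bar>1/R\<bar>^DIM('a)) UNIV"
    using R by simp
  moreover have "?I / \<bar>1/R\<bar>^DIM('a) = R^DIM('a) * ?I" using R by (simp add: power_divide)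
  moreover have "?F ((1/R) *\<^sub>R x + - ((1/R) *\<^sub>R p)) = Phi ((1/R) *\<^sub>R (x - p)) * v x" for x
    using R by (simp add: algebra_simps)
  ultimately show ?thesis by simp
qed



lemma Phi_ge: assumes "norm z < 7/8" shows "Phi z \<ge> (15/64)^3"
proof -
  have "z \<bullet> z = (norm z)^2" by (simp add: power2_norm_eq_inner)
  also have "\<dots> < (7/8)^2" using assms by (intro power_strict_mono) auto
  finally have "1 - z \<bullet> z > 15/64" by (simp add: power2_eq_square)
  moreover have "max 0 (1 - z \<bullet> z) \<ge> 1 - z \<bullet> z" by simp
  ultimately have m15: "max 0 (1 - z \<bullet> z) \<ge> 15/64" by linarith
  have "(15/64)^3 \<le> (max 0 (1 - z \<bullet> z))^3" by (rule power_mono[OF m15]) simp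
  then show ?thesis unfolding Phi_def .
qed

lemma A_pos: "integral (cbox (-One) One) (Phi :: 'a::euclidean_space \<Rightarrow> real) > 0"
proof -
  define n where "n = real DIM('a)"
  have n1: "n \<ge> 1" by (simp add: n_def DIM_positive Suc_le_eq)
  define e where "e = 1 / (2 * n)"
  have e0: "e > 0" "e \<le> 1/2" using n1 by (auto simp: e_def field_simps)
  define Qs :: "'a set" where "Qs = cbox (-(e *\<^sub>R One)) (e *\<^sub>R One)"
  have small: "Phi z \<ge> (15/64)^3" if "z \<in> Qs" for z
  proof -
    have "\<bar>z \<bullet> b\<bar> \<le> e" if "b \<in> Basis" for b
      using \<open>z \<in> Qs\<close> that by (auto simp: Qs_def mem_box inner_minus_left)
    then have "(\<Sum>b\<in>Basis. \<bar>z \<bullet> b\<bar>) \<le> (\<Sum>b\<in>(Basis::'a set). e)" by (intro sum_mono) auto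
    also have "\<dots> = n * e" by (simp add: n_def)
    also have "\<dots> = 1/2" using n1 by (simp add: e_def)
    finally have "norm z \<le> 1/2" using norm_le_l1[of z] by linarith
    then show ?thesis by (intro Phi_ge) auto
  qed
  have cQ: "continuous_on S Phi" for S by (rule continuous_on_subset[OF cont_Phi]) auto
  have "0 < Henstock_Kurzweil_Integration.content Qs * (15/64)^3"
    unfolding Qs_def using e0 by (intro mult_pos_pos content_pos_lt) (auto simp: inner_minus_left)
  also have "Henstock_Kurzweil_Integration.content Qs * (15/64)^3 = integral Qs (\<lambda>_. (15/64)^3)" unfolding Qs_def by (simp only: integral_const) simp
  also have "\<dots> \<le> integral Qs Phi"
    by (rule integral_le) (use small cQ in \<open>auto simp: Qs_def intro!: integrable_continuous\<close>)
  also have "\<dots> \<le> integral (cbox (-One) One) (Phi :: 'a \<Rightarrow> real)"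
  proof (rule integral_subset_le)
    show "Qs \<subseteq> cbox (-One) One"
    proof
      fix z assume z: "z \<in> Qs"
      show "z \<in> cbox (-One) One" unfolding mem_box
      proof (intro ballI conjI)
        fix b :: 'a assume b: "b \<in> Basis"
        have "-e \<le> z \<bullet> b" "z \<bullet> b \<le> e" using z b by (auto simp: Qs_def mem_box inner_minus_left)
        then show "(-One) \<bullet> b \<le> z \<bullet> b" "z \<bullet> b \<le> One \<bullet> b" using e0 b by (auto simp: inner_minus_left)
      qed
    qed
  qed (use cQ in \<open>auto simp: Qs_def Phi_nonneg intro!: integrable_continuous\<close>)
  finally show ?thesis .
qed



lemma norm_scale_dist: "R > 0 \<Longrightarrow> norm ((1/R) *\<^sub>R (y - p)) = dist y p / R"
  by (simp add: dist_norm)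

lemma harnack_main:
  fixes u :: "'a::euclidean_space \<Rightarrow> real"
  assumes r: "r > 0" and h: "harmonic_on u (ball x (2*r))" and ux: "u x \<ge> 0"
  shows "(SUP y\<in>ball x r. \<bar>u y\<bar>) \<le> (8^DIM('a) * (64/15)^3 + 1) * (SUP y\<in>ball x (4/3*r). u y)"
proof -
  define S where "S = ball x (2*r)"
  obtain grad :: "'a \<Rightarrow> 'a" and hess :: "'a \<Rightarrow> 'a \<Rightarrow> 'a" where
    gr: "\<forall>x\<in>S. (u has_derivative (\<lambda>h. grad x \<bullet> h)) (at x)" and
    he: "\<forall>x\<in>S. (grad has_derivative hess x) (at x)" and
    hc: "\<forall>i\<in>Basis. continuous_on S (\<lambda>x. hess x i)" and
    lap: "\<forall>x\<in>S. (\<Sum>i\<in>Basis. hess x i \<bullet> i) = 0"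
    using h unfolding harmonic_on_def S_def by blast
  have S: "open S" by (simp add: S_def)
  have contu: "continuous_on S u"
    using gr has_derivative_continuous continuous_at_imp_continuous_on by blast
  have cb: "cball x (4/3*r) \<subseteq> S" using r by (auto simp: S_def)
  have "compact (u ` cball x (4/3*r))"
    by (rule compact_continuous_image[OF continuous_on_subset[OF contu cb]]) simp
  then have "bdd_above (u ` cball x (4/3*r))" by (simp add: bounded_imp_bdd_above compact_imp_bounded)
  then have bdd: "bdd_above (u ` ball x (4/3*r))" by (rule bdd_above_mono) auto
  define M where "M = (SUP y\<in>ball x (4/3*r). u y)"
  have Mge: "u y \<le> M" if "y \<in> ball x (4/3*r)" for y
    unfolding M_def using bdd that by (rule cSUP_upper2) simp
  have M0: "u x \<le> M" using Mge r by simp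
  define w where "w y = M - u y" for y
  define grad' where "grad' y = - grad y" for y
  define hess' where "hess' y h = - hess y h" for y h
  have gr': "\<forall>x\<in>S. (w has_derivative (\<lambda>h. grad' x \<bullet> h)) (at x)"
  proof
    fix y assume "y \<in> S"
    have "((\<lambda>y. M - u y) has_derivative (\<lambda>h. 0 - grad y \<bullet> h)) (at y)"
      by (intro has_derivative_diff has_derivative_const) (use gr \<open>y \<in> S\<close> in auto)
    then show "(w has_derivative (\<lambda>h. grad' y \<bullet> h)) (at y)"
      by (simp add: w_def[abs_def] grad'_def)
  qed
  have he': "\<forall>x\<in>S. (grad' has_derivative hess' x) (at x)"
  proof
    fix y assume "y \<in> S"
    have "((\<lambda>y. - grad y) has_derivative (\<lambda>h. - hess y h)) (at y)"
      by (intro has_derivative_minus) (use he \<open>y \<in> S\<close> in auto)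
    then show "(grad' has_derivative hess' y) (at y)"
      by (simp add: grad'_def[abs_def] hess'_def[abs_def])
  qed
  have hc': "\<forall>i\<in>Basis. continuous_on S (\<lambda>x. hess' x i)"
    using hc by (auto simp: hess'_def intro!: continuous_intros)
  have lap': "\<forall>x\<in>S. (\<Sum>i\<in>Basis. hess' x i \<bullet> i) = 0"
    using lap by (simp add: hess'_def sum_negf)
  define A where "A = integral (cbox (-One) One) (Phi :: 'a \<Rightarrow> real)"
  have A: "A > 0" unfolding A_def by (rule A_pos)
  define k :: real where "k = (15/64)^3"
  define C :: real where "C = 8^DIM('a) * (64/15)^3"
  have k0: "k > 0" by (simp add: k_def)
  have C0: "C \<ge> 0" by (simp add: C_def)
  have key: "w y0 \<le> C * w x" if y0: "y0 \<in> ball x r" for y0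
  proof -
    define R1 where "R1 = 4/3*r"
    define R2 where "R2 = r/6"
    have R1: "R1 > 0" "cball x R1 \<subseteq> S" using r by (auto simp: R1_def S_def)
    have R2: "R2 > 0" "cball y0 R2 \<subseteq> S"
    proof -
      show "R2 > 0" using r by (simp add: R2_def)
      show "cball y0 R2 \<subseteq> S"
      proof
        fix y assume "y \<in> cball y0 R2"
        then have "dist x y \<le> dist x y0 + dist y0 y" "dist x y0 < r" "dist y0 y \<le> r/6"
          using y0 dist_triangle by (auto simp: R2_def)
        then show "y \<in> S" using r by (simp add: S_def)
      qed
    qed
    have I1: "((\<lambda>y. Phi ((1/R1) *\<^sub>R (y - x)) * w y) has_integral R1^DIM('a) * (w x * A)) UNIV"
      unfolding A_def by (rule mv_UNIV[OF S gr' he' hc' lap' R1])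
    have I2: "((\<lambda>y. Phi ((1/R2) *\<^sub>R (y - y0)) * w y) has_integral R2^DIM('a) * (w y0 * A)) UNIV"
      unfolding A_def by (rule mv_UNIV[OF S gr' he' hc' lap' R2])
    have I2': "((\<lambda>y. k * (Phi ((1/R2) *\<^sub>R (y - y0)) * w y)) has_integral k * (R2^DIM('a) * (w y0 * A))) UNIV"
      by (rule has_integral_mult_right[OF I2])
    have pw: "k * (Phi ((1/R2) *\<^sub>R (y - y0)) * w y) \<le> Phi ((1/R1) *\<^sub>R (y - x)) * w y" for y
    proof (cases "y \<in> ball y0 R2")
      case True
      have "dist y x \<le> dist y y0 + dist y0 x" by (rule dist_triangle)
      moreover have "dist y y0 < R2" "dist y0 x < r" using True y0 by (auto simp: dist_commute)
      ultimately have dyx: "dist y x < 7/6 * r" by (simp add: R2_def)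
      then have wy: "w y \<ge> 0" using Mge[of y] r by (simp add: w_def dist_commute)
      have "norm ((1/R1) *\<^sub>R (y - x)) = dist y x / R1" using R1 by (intro norm_scale_dist) auto
      also have "\<dots> < (7/6 * r) / (4/3 * r)" unfolding R1_def using dyx r by (intro divide_strict_right_mono) auto
      also have "\<dots> = 7/8" using r by simp
      finally have P1: "Phi ((1/R1) *\<^sub>R (y - x)) \<ge> k" unfolding k_def by (rule Phi_ge)
      have "Phi ((1/R2) *\<^sub>R (y - y0)) * w y \<le> 1 * w y"
        by (rule mult_right_mono[OF Phi_le1 wy])
      then have "k * (Phi ((1/R2) *\<^sub>R (y - y0)) * w y) \<le> k * w y" using k0 by simp
      also have "\<dots> \<le> Phi ((1/R1) *\<^sub>R (y - x)) * w y" by (rule mult_right_mono[OF P1 wy])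
      finally show ?thesis .
    next
      case False
      have "norm ((1/R2) *\<^sub>R (y - y0)) = dist y y0 / R2" using R2 by (intro norm_scale_dist) auto
      moreover have "dist y y0 \<ge> R2" using False by (simp add: dist_commute)
      ultimately have "norm ((1/R2) *\<^sub>R (y - y0)) \<ge> 1" using R2 by simp
      then have "Phi ((1/R2) *\<^sub>R (y - y0)) = 0" by (rule Phi_zero)
      moreover have "0 \<le> Phi ((1/R1) *\<^sub>R (y - x)) * w y"
      proof (cases "y \<in> ball x R1")
        case True
        then have "w y \<ge> 0" using Mge[of y] by (simp add: w_def R1_def)
        then show ?thesis by (intro mult_nonneg_nonneg Phi_nonneg)
      next
        case False
        have "norm ((1/R1) *\<^sub>R (y - x)) = dist y x / R1" using R1 by (intro norm_scale_dist) auto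
        moreover have "dist y x \<ge> R1" using False by (simp add: dist_commute)
        ultimately have "norm ((1/R1) *\<^sub>R (y - x)) \<ge> 1" using R1 by simp
        then show ?thesis by (simp add: Phi_zero)
      qed
      ultimately show ?thesis by simp
    qed
    have "k * (R2^DIM('a) * (w y0 * A)) \<le> R1^DIM('a) * (w x * A)"
      by (rule has_integral_le[OF I2' I1]) (use pw in auto)
    moreover have "R1^DIM('a) = 8^DIM('a) * R2^DIM('a)"
      by (simp add: R1_def R2_def flip: power_mult_distrib)
    ultimately have "(k * w y0) * (R2^DIM('a) * A) \<le> (8^DIM('a) * w x) * (R2^DIM('a) * A)"
      by (simp add: algebra_simps)
    moreover have "R2^DIM('a) * A > 0" using R2 A by simp
    ultimately have "k * w y0 \<le> 8^DIM('a) * w x" using mult_le_cancel_right_pos by blast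
    then have "w y0 \<le> (8^DIM('a) * w x) / k" using k0 by (simp add: field_simps)
    also have "\<dots> = C * w x" by (simp add: C_def k_def field_simps)
    finally show ?thesis .
  qed
  have bound: "\<bar>u y\<bar> \<le> (C + 1) * M" if y: "y \<in> ball x r" for y
  proof -
    have "u y \<le> M" using Mge[of y] y r by simp
    moreover have "M - u y \<le> C * (M - u x)" using key[OF y] by (simp add: w_def)
    moreover have "C * (M - u x) \<le> C * M" using C0 ux by (simp add: mult_left_mono)
    moreover have "M \<ge> 0" using M0 ux by simp
    ultimately show ?thesis using C0 by (simp add: abs_le_iff algebra_simps)
  qed
  have "(SUP y\<in>ball x r. \<bar>u y\<bar>) \<le> (C + 1) * M"
    by (rule cSUP_least) (use bound r in auto)
  then show ?thesis by (simp add: C_def M_def)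
qed

theorem claim2p2:
  "\<exists>c>0. \<forall>(x::'a::euclidean_space) (r::real) (u::'a \<Rightarrow> real).
     r > 0 \<longrightarrow> harmonic_on u (ball x (2 * r)) \<longrightarrow>
     \<not> (\<exists>k. \<forall>y\<in>ball x (2 * r). u y = k) \<longrightarrow> u x \<ge> 0 \<longrightarrow>
     (SUP y\<in>ball x (4/3 * r). u y) \<ge> c * (SUP y\<in>ball x r. \<bar>u y\<bar>)"
proof (intro exI[of _ "1 / (8^DIM('a) * (64/15)^3 + 1)"] conjI allI impI)
  show "0 < 1 / (8^DIM('a) * (64/15)^3 + (1::real))" by (simp add: add_pos_nonneg)
  fix x :: 'a and r :: real and u :: "'a \<Rightarrow> real"
  assume r: "r > 0" and h: "harmonic_on u (ball x (2 * r))" and ux: "u x \<ge> 0"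
  define C :: real where "C = 8^DIM('a) * (64/15)^3 + 1"
  have C: "C > 0" by (simp add: C_def add_pos_nonneg)
  have "(SUP y\<in>ball x r. \<bar>u y\<bar>) \<le> C * (SUP y\<in>ball x (4/3*r). u y)"
    unfolding C_def by (rule harnack_main[OF r h ux])
  then have "(1/C) * (SUP y\<in>ball x r. \<bar>u y\<bar>) \<le> (SUP y\<in>ball x (4/3*r). u y)"
    using C by (simp add: field_simps)
  then show "1 / (8^DIM('a) * (64/15)^3 + 1) * (SUP y\<in>ball x r. \<bar>u y\<bar>) \<le> (SUP y\<in>ball x (4/3*r). u y)"
    by (simp add: C_def)
qed

end
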